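(* Fix $W>0$, $N_0>0$, dual variables $\mu\ge0$, $\lambda\ge0$, and complex numbers $H_{\rm SD},H_{\rm SR},H_{\rm RD}$. Consider the problem $$\max_{P\ge0,\ \bar\Xi\ge0}\ \frac{1}{2W}\log_2\left(1+\frac{\left(|H_{\rm SD}|+|H_{\rm RD}H_{\rm SR}|\bar\Xi\right)^2P}{\left(|H_{\rm RD}|^2\bar\Xi^2+1\right)N_0}\right)-\mu P-\lambda\bar\Xi^2|H_{\rm SR}|^2P.$$ Define $$\beta(\bar\Xi)=\frac{\left(|H_{\rm SD}|+|H_{\rm RD}H_{\rm SR}|\bar\Xi\right)^2}{\left(\mu+\lambda\bar\Xi^2|H_{\rm SR}|^2\right)\left(|H_{\rm RD}|^2\bar\Xi^2+1\right)N_0},$$ $$\chi(\bar\Xi)=\left(\frac{1}{(2\ln2)W(\mu+\lambda\bar\Xi^2|H_{\rm SR}|^2)}-\frac{\left(|H_{\rm RD}|^2\bar\Xi^2+1\right)N_0}{\left(|H_{\rm SD}|+|H_{\rm RD}H_{\rm SR}|\bar\Xi\right)^2}\right)^+,$$ where $x^+=\max(x,0)$. Then an optimal solution $(P^\star,\bar\Xi^\star)$ of the problem is given by $$\bar\Xi^\star=\begin{cases}\arg\max_{\bar\Xi\ge0}\beta(\bar\Xi), & \text{if } \max_{\bar\Xi\ge0}\beta(\bar\Xi)>(2\ln2)W,\\ 0, & \text{otherwise},\end{cases}\qquad P^\star=\chi(\bar\Xi^\star).$$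
   Context: This is the per-frequency subproblem arising from the Lagrangian of the rate maximization for a full-duplex filter-and-forward relay channel, where $P$ is the source power spectral density at a given frequency, $\bar\Xi$ is the amplitude of the relay's effective filter gain at that frequency, $H_{\rm SD},H_{\rm SR},H_{\rm RD}$ are the source–destination, source–relay and relay–destination channel frequency responses at that frequency, and $\mu,\lambda$ are the Lagrange multipliers of the source and relay power constraints. *)

theory Defs
  imports Complex_Main
begin

text \<open>Per-frequency Lagrangian objective (P = source PSD, X = relay filter amplitude).\<close>
definition objective :: "real \<Rightarrow> real \<Rightarrow> real \<Rightarrow> real \<Rightarrow> complex \<Rightarrow> complex \<Rightarrow> complex \<Rightarrow> real \<Rightarrow> real \<Rightarrow> real" where
  "objective W N0 mu lambda HSD HSR HRD P X =
     1 / (2 * W) * log 2 (1 + (cmod HSD + cmod (HRD * HSR) * X)^2 * P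
                               / ((cmod HRD ^ 2 * X^2 + 1) * N0))
     - mu * P - lambda * X^2 * cmod HSR ^ 2 * P"

definition beta_fn :: "real \<Rightarrow> real \<Rightarrow> real \<Rightarrow> complex \<Rightarrow> complex \<Rightarrow> complex \<Rightarrow> real \<Rightarrow> real" where
  "beta_fn N0 mu lambda HSD HSR HRD X =
     (cmod HSD + cmod (HRD * HSR) * X)^2
     / ((mu + lambda * X^2 * cmod HSR ^ 2) * (cmod HRD ^ 2 * X^2 + 1) * N0)"

text \<open>The positive part; when the channel gain term vanishes, the subtracted term
  N0-fraction is +infinity, so the positive part is 0 (convention made explicit).\<close>
definition chi_fn :: "real \<Rightarrow> real \<Rightarrow> real \<Rightarrow> real \<Rightarrow> complex \<Rightarrow> complex \<Rightarrow> complex \<Rightarrow> real \<Rightarrow> real" where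
  "chi_fn W N0 mu lambda HSD HSR HRD X =
     (if cmod HSD + cmod (HRD * HSR) * X = 0 then 0
      else max (1 / ((2 * ln 2) * W * (mu + lambda * X^2 * cmod HSR ^ 2))
                - (cmod HRD ^ 2 * X^2 + 1) * N0 / (cmod HSD + cmod (HRD * HSR) * X)^2) 0)"

definition is_optimal :: "real \<Rightarrow> real \<Rightarrow> real \<Rightarrow> real \<Rightarrow> complex \<Rightarrow> complex \<Rightarrow> complex \<Rightarrow> real \<Rightarrow> real \<Rightarrow> bool" where
  "is_optimal W N0 mu lambda HSD HSR HRD Ps Xs \<longleftrightarrow>
     Ps \<ge> 0 \<and> Xs \<ge> 0 \<and>
     (\<forall>P X. P \<ge> 0 \<longrightarrow> X \<ge> 0 \<longrightarrow>
        objective W N0 mu lambda HSD HSR HRD P X \<le> objective W N0 mu lambda HSD HSR HRD Ps Xs)"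

end

theory Submission
  imports Defs
begin

lemma bound_lem:
  fixes W N0 d c P b s :: real
  assumes W: "W > 0" and N0: "N0 > 0" and d: "d > 0" and c: "c > 0" and P: "P \<ge> 0" and b: "b > 0"
    and le: "s^2 / (c * d * N0) \<le> b"
  shows "1 / (2 * W) * log 2 (1 + s^2 * P / (d * N0)) - c * P
         \<le> (ln (b / (2 * ln 2 * W)) - 1) / (2 * ln 2 * W) + 1 / b"
proof -
  define k where "k = 2 * ln 2 * W"
  define a where "a = s^2 / (d * N0)"
  have k: "k > 0" using W by (simp add: k_def)
  have a: "a \<ge> 0" using d N0 by (simp add: a_def)
  have aeq: "s^2 * P / (d * N0) = a * P" by (simp add: a_def)
  have abc: "a \<le> b * c" using le c d N0 unfolding a_def
    by (simp add: field_simps)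
  define y where "y = 1 + a * P"
  have y: "y > 0" using a P by (simp add: y_def add_pos_nonneg)
  have lnsplit: "ln y = ln (b / k) + ln (y * k / b)"
    using y k b by (simp add: ln_div ln_mult)
  have "ln (y * k / b) \<le> y * k / b - 1" using y k b by (intro ln_le_minus_one) simp
  hence "ln y \<le> ln (b / k) + y * k / b - 1" using lnsplit by simp
  hence "ln y / k \<le> (ln (b / k) + y * k / b - 1) / k" using k by (simp add: divide_right_mono)
  also have "\<dots> = (ln (b / k) - 1) / k + 1 / b + a * P / b"
    using k b by (simp add: y_def field_simps)
  finally have 1: "ln y / k \<le> (ln (b / k) - 1) / k + 1 / b + a * P / b" .
  have "a * P / b \<le> c * P" using abc b P
    by (simp add: divide_le_eq mult.commute mult.left_commute mult_left_mono)
  moreover have "1 / (2 * W) * log 2 y = ln y / k"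
    by (simp add: k_def log_def)
  ultimately show ?thesis using 1 aeq by (simp add: y_def k_def)
qed

lemma value_lem:
  fixes W N0 d c s :: real
  assumes W: "W > 0" and N0: "N0 > 0" and d: "d > 0" and c: "c > 0" and s: "s \<noteq> 0"
    and gt: "s^2 / (c * d * N0) > 2 * ln 2 * W"
  shows "1 / (2 * W) * log 2 (1 + s^2 * (1 / (2 * ln 2 * W * c) - d * N0 / s^2) / (d * N0))
           - c * (1 / (2 * ln 2 * W * c) - d * N0 / s^2)
         = (ln (s^2 / (c * d * N0) / (2 * ln 2 * W)) - 1) / (2 * ln 2 * W) + 1 / (s^2 / (c * d * N0))"
proof -
  define k where "k = 2 * ln 2 * W"
  have k: "k > 0" using W by (simp add: k_def)
  have s2: "s^2 > 0" using s by simp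
  have e1: "1 + s^2 * (1 / (k * c) - d * N0 / s^2) / (d * N0) = s^2 / (c * d * N0) / k"
    using k s2 d N0 c by (simp add: field_simps)
  have e2: "c * (1 / (k * c) - d * N0 / s^2) = 1 / k - 1 / (s^2 / (c * d * N0))"
    using k s2 d N0 c by (simp add: field_simps)
  have e3: "1 / (2 * W) * log 2 (s^2 / (c * d * N0) / k) = ln (s^2 / (c * d * N0) / k) / k"
    by (simp add: k_def log_def)
  show ?thesis unfolding k_def[symmetric] using e1 e2 e3 k
    by (simp add: diff_divide_distrib)
qed

theorem mainTheorem4:
  fixes W N0 mu lambda :: real and HSD HSR HRD :: complex
  assumes "W > 0" and "N0 > 0" and "mu \<ge> 0" and "lambda \<ge> 0"
    and beta_well_defined: "\<forall>X\<ge>0. mu + lambda * X^2 * cmod HSR ^ 2 \<noteq> 0"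
  shows
    "(\<forall>Xs. Xs \<ge> 0
        \<longrightarrow> (\<forall>X\<ge>0. beta_fn N0 mu lambda HSD HSR HRD X \<le> beta_fn N0 mu lambda HSD HSR HRD Xs)
        \<longrightarrow> beta_fn N0 mu lambda HSD HSR HRD Xs > (2 * ln 2) * W
        \<longrightarrow> is_optimal W N0 mu lambda HSD HSR HRD (chi_fn W N0 mu lambda HSD HSR HRD Xs) Xs)
     \<and>
     ((\<forall>X\<ge>0. beta_fn N0 mu lambda HSD HSR HRD X \<le> (2 * ln 2) * W)
        \<longrightarrow> is_optimal W N0 mu lambda HSD HSR HRD (chi_fn W N0 mu lambda HSD HSR HRD 0) 0)"
proof -
  define k where "k = 2 * ln 2 * W"
  have k: "k > 0" using assms(1) by (simp add: k_def)
  define s where "s = (\<lambda>X::real. cmod HSD + cmod (HRD * HSR) * X)"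
  define d where "d = (\<lambda>X::real. cmod HRD ^ 2 * X^2 + 1)"
  define c where "c = (\<lambda>X::real. mu + lambda * X^2 * cmod HSR ^ 2)"
  have cpos: "c X > 0" if "X \<ge> 0" for X
  proof -
    have "c X \<ge> 0" using assms(3,4) by (simp add: c_def)
    moreover have "c X \<noteq> 0" using beta_well_defined that by (simp add: c_def)
    ultimately show ?thesis by simp
  qed
  have dpos: "d X > 0" for X by (simp add: d_def add_nonneg_pos)
  have obj: "objective W N0 mu lambda HSD HSR HRD P X
     = 1 / (2 * W) * log 2 (1 + (s X)^2 * P / (d X * N0)) - c X * P" for P X
    by (simp add: objective_def s_def d_def c_def algebra_simps)
  have beta: "beta_fn N0 mu lambda HSD HSR HRD X = (s X)^2 / (c X * d X * N0)" for X
    by (simp add: beta_fn_def s_def d_def c_def)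
  have chi: "chi_fn W N0 mu lambda HSD HSR HRD X =
     (if s X = 0 then 0 else max (1 / (k * c X) - d X * N0 / (s X)^2) 0)" for X
    by (simp add: chi_fn_def s_def d_def c_def k_def)
  have main: "objective W N0 mu lambda HSD HSR HRD P X \<le> (ln (b / k) - 1) / k + 1 / b"
    if "P \<ge> 0" "X \<ge> 0" "b > 0" "(s X)^2 / (c X * d X * N0) \<le> b" for P X b
    unfolding obj k_def
    by (rule bound_lem[OF assms(1,2) dpos cpos[OF that(2)] that(1,3,4)])
  show ?thesis
  proof (intro conjI allI impI)
    fix Xs :: real
    assume Xs: "Xs \<ge> 0"
      and amax: "\<forall>X\<ge>0. beta_fn N0 mu lambda HSD HSR HRD X \<le> beta_fn N0 mu lambda HSD HSR HRD Xs"
      and gt: "beta_fn N0 mu lambda HSD HSR HRD Xs > 2 * ln 2 * W"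
    define b where "b = (s Xs)^2 / (c Xs * d Xs * N0)"
    have bk: "b > k" using gt by (simp add: beta b_def k_def)
    have s0: "s Xs \<noteq> 0" using bk k by (auto simp: b_def)
    have s2: "(s Xs)^2 > 0" using s0 by simp
    have cX: "c Xs > 0" using cpos Xs .
    have pos: "1 / (k * c Xs) - d Xs * N0 / (s Xs)^2 > 0"
    proof -
      have "k * (c Xs * d Xs * N0) < (s Xs)^2" using bk cX dpos[of Xs] assms(2)
        by (simp add: b_def pos_less_divide_eq)
      thus ?thesis using k cX dpos[of Xs] assms(2) s2
        by (simp add: field_simps)
    qed
    have chiv: "chi_fn W N0 mu lambda HSD HSR HRD Xs = 1 / (k * c Xs) - d Xs * N0 / (s Xs)^2"
      using pos s0 by (simp add: chi)
    have val: "objective W N0 mu lambda HSD HSR HRD (chi_fn W N0 mu lambda HSD HSR HRD Xs) Xs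
        = (ln (b / k) - 1) / k + 1 / b"
      unfolding chiv obj b_def k_def
      by (rule value_lem[OF assms(1,2) dpos cX s0]) (use bk in \<open>simp add: b_def k_def\<close>)
    show "is_optimal W N0 mu lambda HSD HSR HRD (chi_fn W N0 mu lambda HSD HSR HRD Xs) Xs"
      unfolding is_optimal_def
    proof (intro conjI allI impI)
      show "0 \<le> chi_fn W N0 mu lambda HSD HSR HRD Xs" using pos chiv by simp
      show "0 \<le> Xs" by fact
      fix P X :: real assume P: "P \<ge> 0" and X: "X \<ge> 0"
      have "(s X)^2 / (c X * d X * N0) \<le> b"
        using amax X by (simp add: beta b_def)
      from main[OF P X _ this] bk k
      show "objective W N0 mu lambda HSD HSR HRD P X
          \<le> objective W N0 mu lambda HSD HSR HRD (chi_fn W N0 mu lambda HSD HSR HRD Xs) Xs"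
        unfolding val by simp
    qed
  next
    assume all: "\<forall>X\<ge>0. beta_fn N0 mu lambda HSD HSR HRD X \<le> 2 * ln 2 * W"
    have chi0: "chi_fn W N0 mu lambda HSD HSR HRD 0 = 0"
    proof (cases "s 0 = 0")
      case True thus ?thesis by (simp add: chi)
    next
      case False
      have s2: "(s 0)^2 > 0" using False by simp
      have c0: "c 0 > 0" using cpos by simp
      have "(s 0)^2 / (c 0 * d 0 * N0) \<le> k" using all by (simp add: beta k_def)
      hence "(s 0)^2 \<le> k * (c 0 * d 0 * N0)" using c0 dpos[of 0] assms(2)
        by (simp add: divide_le_eq mult.commute)
      hence "1 / (k * c 0) - d 0 * N0 / (s 0)^2 \<le> 0" using k c0 dpos[of 0] assms(2) s2
        by (simp add: field_simps)
      thus ?thesis using False by (simp add: chi)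
    qed
    show "is_optimal W N0 mu lambda HSD HSR HRD (chi_fn W N0 mu lambda HSD HSR HRD 0) 0"
      unfolding is_optimal_def chi0
    proof (intro conjI allI impI)
      fix P X :: real assume P: "P \<ge> 0" and X: "X \<ge> 0"
      have "(s X)^2 / (c X * d X * N0) \<le> k" using all X by (simp add: beta k_def)
      from main[OF P X k this] k
      show "objective W N0 mu lambda HSD HSR HRD P X \<le> objective W N0 mu lambda HSD HSR HRD 0 0"
        by (simp add: obj)
    qed simp_all
  qed
qed

end
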